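(* In Setting A, for every $\beta\ge0$ and every equilibrium state $\widehat\mu_\beta$ for $\beta\phi$ on $\Sigma_{234}$, one has $\widehat\mu_\beta([3])>0$.
   Context: Setting A. Fix an integer $L\ge1$ and reals $\alpha,\gamma,\delta,\varepsilon>0$. Let $\mathcal A=\{1,2,3,4,1_1,\dots,1_L\}$. Let $\Sigma\subset\mathcal A^{\mathbb N}$ be the one-sided subshift of finite type with allowed transitions: $a\to b$ for all $a,b\in\{1,1_1,\dots,1_L\}$; $1\to2$; $2\to1$, $2\to2$, $2\to3$; $3\to2$, $3\to3$, $3\to4$; $4\to3$, $4\to4$; $\sigma$ is the left shift, $[a]$ the cylinder $\{x_0=a\}$. The potential $\phi:\Sigma\to\mathbb R$ is: $\phi(x)=-\alpha$ if $x_0\in\{1,1_1,\dots,1_L\}$; if $x_0=2$, $\phi(x)=-\log\frac{n+1}{n}$ with $n=\min\{j\ge1:x_j\ne2\}$ ($\phi(222\cdots)=0$); if $x_0=3$, $\phi(x)=\gamma-\varepsilon\log\frac{n+1}{n}$ with $n=\min\{j\ge1:x_j=2\}$ ($\phi(x)=\gamma$ if no such $j$); if $x_0=4$, $\phi(x)=\gamma+\delta-\varepsilon\log\frac{n+1}{n}$ with the same $n$ ($\gamma+\delta$ if no such $j$). $\Sigma_{234}=\Sigma\cap\{2,3,4\}^{\mathbb N}$; an equilibrium state for $\beta\phi$ on $\Sigma_{234}$ is a $\sigma$-invariant probability supported on $\Sigma_{234}$ maximizing $h_\mu(\sigma)+\beta\int\phi\,d\mu$ among such measures. *)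

theory Defs
  imports "HOL-Probability.Probability"
begin

text \<open>Alphabet: S1 = symbol 1, S2, S3, S4 the symbols 2,3,4, and S1i i the symbol 1_i.\<close>
datatype sym = S1 | S2 | S3 | S4 | S1i nat

definition is_one :: "nat \<Rightarrow> sym \<Rightarrow> bool" where
  "is_one L a \<longleftrightarrow> a = S1 \<or> (\<exists>i. 1 \<le> i \<and> i \<le> L \<and> a = S1i i)"

definition alphabet :: "nat \<Rightarrow> sym set" where
  "alphabet L = {a. is_one L a} \<union> {S2, S3, S4}"

definition allowed :: "nat \<Rightarrow> sym \<Rightarrow> sym \<Rightarrow> bool" where
  "allowed L a b \<longleftrightarrow>
     (is_one L a \<and> is_one L b) \<or> (a = S1 \<and> b = S2) \<or>
     (a = S2 \<and> b \<in> {S1, S2, S3}) \<or> (a = S3 \<and> b \<in> {S2, S3, S4}) \<or>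
     (a = S4 \<and> b \<in> {S3, S4})"

definition SFT :: "nat \<Rightarrow> (nat \<Rightarrow> sym) set" where
  "SFT L = {x. (\<forall>n. x n \<in> alphabet L) \<and> (\<forall>n. allowed L (x n) (x (Suc n)))}"

definition SFT234 :: "nat \<Rightarrow> (nat \<Rightarrow> sym) set" where
  "SFT234 L = {x \<in> SFT L. \<forall>n. x n \<in> {S2, S3, S4}}"

definition shift :: "(nat \<Rightarrow> sym) \<Rightarrow> (nat \<Rightarrow> sym)" where
  "shift x = (\<lambda>n. x (Suc n))"

definition seq_space :: "(nat \<Rightarrow> sym) measure" where
  "seq_space = PiM UNIV (\<lambda>_. count_space UNIV)"

definition phi :: "real \<Rightarrow> real \<Rightarrow> real \<Rightarrow> real \<Rightarrow> (nat \<Rightarrow> sym) \<Rightarrow> real" where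
  "phi \<alpha> \<gamma> \<delta> \<epsilon> x =
    (let n2 = (LEAST j. 1 \<le> j \<and> x j \<noteq> S2);
         n3 = (LEAST j. 1 \<le> j \<and> x j = S2)
     in case x 0 of
       S2 \<Rightarrow> (if \<exists>j\<ge>1. x j \<noteq> S2 then - ln (real (n2 + 1) / real n2) else 0)
     | S3 \<Rightarrow> (if \<exists>j\<ge>1. x j = S2 then \<gamma> - \<epsilon> * ln (real (n3 + 1) / real n3) else \<gamma>)
     | S4 \<Rightarrow> (if \<exists>j\<ge>1. x j = S2 then \<gamma> + \<delta> - \<epsilon> * ln (real (n3 + 1) / real n3)
              else \<gamma> + \<delta>)
     | _ \<Rightarrow> - \<alpha>)"

definition finite_meas_partition :: "'a measure \<Rightarrow> 'a set set \<Rightarrow> bool" where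
  "finite_meas_partition M P \<longleftrightarrow> finite P \<and> P \<subseteq> sets M \<and> disjoint P \<and> \<Union>P = space M"

definition part_entropy :: "'a measure \<Rightarrow> 'a set set \<Rightarrow> real" where
  "part_entropy M P = (\<Sum>A\<in>P. - measure M A * ln (measure M A))"

definition join_part :: "'a measure \<Rightarrow> ('a \<Rightarrow> 'a) \<Rightarrow> 'a set set \<Rightarrow> nat \<Rightarrow> 'a set set" where
  "join_part M T P n =
     {(\<Inter>i<n. (T ^^ i) -` (f i)) \<inter> space M | f. \<forall>i<n. f i \<in> P} - {{}}"

definition entropy_part :: "'a measure \<Rightarrow> ('a \<Rightarrow> 'a) \<Rightarrow> 'a set set \<Rightarrow> real" where
  "entropy_part M T P = lim (\<lambda>n. part_entropy M (join_part M T P (Suc n)) / real (Suc n))"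

definition KS_entropy :: "'a measure \<Rightarrow> ('a \<Rightarrow> 'a) \<Rightarrow> ereal" where
  "KS_entropy M T = (SUP P \<in> {P. finite_meas_partition M P}. ereal (entropy_part M T P))"

definition inv_prob_234 :: "nat \<Rightarrow> (nat \<Rightarrow> sym) measure \<Rightarrow> bool" where
  "inv_prob_234 L M \<longleftrightarrow> sets M = sets seq_space \<and> prob_space M \<and>
     shift \<in> measurable M M \<and> distr M M shift = M \<and>
     SFT234 L \<in> sets M \<and> emeasure M (SFT234 L) = 1"

definition free_energy :: "real \<Rightarrow> ((nat \<Rightarrow> sym) \<Rightarrow> real) \<Rightarrow> (nat \<Rightarrow> sym) measure \<Rightarrow> ereal" where
  "free_energy \<beta> f M = KS_entropy M shift + ereal (\<beta> * integral\<^sup>L M f)"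

definition equilibrium_state_234 ::
    "nat \<Rightarrow> real \<Rightarrow> ((nat \<Rightarrow> sym) \<Rightarrow> real) \<Rightarrow> (nat \<Rightarrow> sym) measure \<Rightarrow> bool" where
  "equilibrium_state_234 L \<beta> f M \<longleftrightarrow> inv_prob_234 L M \<and>
     (\<forall>N. inv_prob_234 L N \<longrightarrow> free_energy \<beta> f N \<le> free_energy \<beta> f M)"

end

theory Submission
  imports Defs
begin


definition dB :: "real \<Rightarrow> sym pmf" where
  "dB s = map_pmf (\<lambda>b. if b then S3 else S4) (bernoulli_pmf s)"

definition NB :: "real \<Rightarrow> (nat \<Rightarrow> sym) measure" where
  "NB s = PiM UNIV (\<lambda>_. measure_pmf (dB s))"

lemma NB_sets: "sets (NB s) = sets seq_space"
  unfolding NB_def seq_space_def by (rule sets_PiM_cong) auto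

lemma NB_space: "space (NB s) = UNIV"
  unfolding NB_def by (simp add: space_PiM)

lemma NB_prob: "prob_space (NB s)"
  unfolding NB_def by (intro prob_space_PiM measure_pmf.prob_space_axioms)

lemma shift_meas: "shift \<in> measurable (NB s) (NB s)"
  unfolding NB_def shift_def by (rule measurable_PiM_single') (auto intro: measurable_component_singleton simp: space_PiM)

lemma NB_inv: "distr (NB s) (NB s) shift = NB s"
proof -
  have "distr (PiM UNIV (\<lambda>_. measure_pmf (dB s))) (PiM UNIV (\<lambda>i. (\<lambda>_. measure_pmf (dB s))  (Suc i))) (\<lambda>\<omega>. \<lambda>n\<in>UNIV. \<omega> (Suc n)) = PiM UNIV (\<lambda>i. (\<lambda>_. measure_pmf (dB s)) (Suc i))"
    by (rule distr_PiM_reindex) (auto intro: measure_pmf.prob_space_axioms)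
  moreover have "(\<lambda>\<omega>. \<lambda>n\<in>UNIV. \<omega> (Suc n)) = shift" by (auto simp: shift_def restrict_def fun_eq_iff)
  ultimately show ?thesis unfolding NB_def by simp
qed



definition qB :: "real \<Rightarrow> bool \<Rightarrow> real" where "qB s b = (if b then s else 1 - s)"
definition prB :: "real \<Rightarrow> bool list \<Rightarrow> real" where "prB s w = prod_list (map (qB s) w)"
definition Bs :: "bool list \<Rightarrow> (nat \<Rightarrow> sym) set" where
  "Bs w = {x. \<forall>i<length w. (x i = S3) = w ! i}"

lemma dB_S3: "0 \<le> s \<Longrightarrow> s \<le> 1 \<Longrightarrow> measure (measure_pmf (dB s)) {S3} = s"
proof -
  assume a: "0 \<le> s" "s \<le> 1"
  have e: "(\<lambda>b. if b then S3 else S4) -` {S3} = {True}" by (auto split: if_splits)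
  show ?thesis unfolding dB_def using a by (simp add: measure_pmf_single pmf_map e)
qed

lemma dB_nS3: "0 \<le> s \<Longrightarrow> s \<le> 1 \<Longrightarrow> measure (measure_pmf (dB s)) (-{S3}) = 1 - s"
proof -
  assume a: "0 \<le> s" "s \<le> 1"
  have "measure (measure_pmf (dB s)) (-{S3}) = 1 - measure (measure_pmf (dB s)) {S3}"
    using measure_pmf.prob_compl[of "{S3}" "dB s"] by (simp add: Compl_eq_Diff_UNIV)
  then show ?thesis using dB_S3[OF a] by simp
qed

lemma lists_Suc: "{w::bool list. length w = Suc n} = (\<lambda>(b,w). b # w) ` (UNIV \<times> {w. length w = n})"
  by (auto simp: length_Suc_conv image_iff)

lemma sum_lists_Suc:
  "(\<Sum>w\<in>{w::bool list. length w = Suc n}. f w) = (\<Sum>b\<in>UNIV. \<Sum>w\<in>{w. length w = n}. f (b # w))"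
proof -
  have "inj_on (\<lambda>(b,w). b # (w::bool list)) (UNIV \<times> {w. length w = n})"
    by (auto simp: inj_on_def)
  then have "(\<Sum>w\<in>{w::bool list. length w = Suc n}. f w) = (\<Sum>p\<in>UNIV \<times> {w. length w = n}. f (fst p # snd p))"
    unfolding lists_Suc by (subst sum.reindex) (auto simp: case_prod_beta)
  also have "\<dots> = (\<Sum>b\<in>UNIV. \<Sum>w\<in>{w. length w = n}. f (b # w))"
    by (simp add: sum.cartesian_product case_prod_beta)
  finally show ?thesis .
qed

lemma prB_pos: "0 < s \<Longrightarrow> s < 1 \<Longrightarrow> 0 < prB s w"
  unfolding prB_def by (induction w) (auto simp: qB_def)

lemma prB_sum: "(\<Sum>w\<in>{w::bool list. length w = n}. prB s w) = 1"
proof (induction n)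
  case 0 then show ?case by (simp add: prB_def)
next
  case (Suc n)
  have "(\<Sum>w\<in>{w::bool list. length w = Suc n}. prB s w) = (\<Sum>b\<in>UNIV. qB s b * (\<Sum>w\<in>{w. length w = n}. prB s w))"
    by (simp add: sum_lists_Suc prB_def sum_distrib_left)
  also have "\<dots> = 1" using Suc by (simp add: UNIV_bool qB_def)
  finally show ?case .
qed

definition HB :: "real \<Rightarrow> real" where "HB s = - s * ln s - (1 - s) * ln (1 - s)"

lemma prB_ent: assumes "0 < s" "s < 1"
  shows "(\<Sum>w\<in>{w::bool list. length w = n}. - prB s w * ln (prB s w)) = real n * HB s"
proof (induction n)
  case 0 then show ?case by (simp add: prB_def)
next
  case (Suc n)
  have q: "qB s b \<noteq> 0" for b using assms by (simp add: qB_def)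
  have p: "prod_list (map (qB s) w) \<noteq> 0" for w using prB_pos[OF assms, of w] by (simp add: prB_def)
  have "(\<Sum>w\<in>{w::bool list. length w = Suc n}. - prB s w * ln (prB s w))
     = (\<Sum>b\<in>UNIV. \<Sum>w\<in>{w. length w = n}. - (qB s b * prB s w) * (ln (qB s b) + ln (prB s w)))"
    using q p by (simp add: sum_lists_Suc prB_def ln_mult)
  also have "\<dots> = (\<Sum>b\<in>UNIV. (- qB s b * ln (qB s b)) * (\<Sum>w\<in>{w. length w = n}. prB s w)
        + qB s b * (\<Sum>w\<in>{w. length w = n}. - prB s w * ln (prB s w)))"
    by (intro sum.cong refl) (simp add: sum_distrib_left sum.distrib[symmetric] algebra_simps)
  also have "\<dots> = real (Suc n) * HB s" using Suc by (simp add: prB_sum UNIV_bool qB_def HB_def algebra_simps)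
  finally show ?case .
qed



lemma funpow_shift: "(shift ^^ i) x = (\<lambda>k. x (k + i))"
  by (induction i arbitrary: x) (auto simp: shift_def)

definition A3 :: "(nat \<Rightarrow> sym) set" where "A3 = {x. x 0 = S3}"

lemma Bs_emb: "Bs w = prod_emb UNIV (\<lambda>_. measure_pmf (dB s)) {..<length w}
   (PiE {..<length w} (\<lambda>i. if w ! i then {S3} else -{S3}))"
  by (rule set_eqI) (simp add: prod_emb_iff Bs_def PiE_iff restrict_def extensional_def, blast)

lemma prB_nth: "prB s w = (\<Prod>i<length w. qB s (w ! i))"
  unfolding prB_def by (induction w) (simp_all add: prod.lessThan_Suc_shift del: prod.lessThan_Suc)

lemma NB_Bs: assumes "0 \<le> s" "s \<le> 1" shows "measure (NB s) (Bs w) = prB s w"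
proof -
  have "emeasure (NB s) (Bs w) = (\<Prod>i\<in>{..<length w}. emeasure (measure_pmf (dB s)) (if w ! i then {S3} else -{S3}))"
    unfolding NB_def Bs_emb[of w s]
    by (rule emeasure_PiM_emb) (auto intro: measure_pmf.prob_space_axioms)
  also have "\<dots> = (\<Prod>i\<in>{..<length w}. ennreal (qB s (w ! i)))"
    using dB_S3[OF assms] dB_nS3[OF assms]
    by (intro prod.cong refl) (simp add: measure_pmf.emeasure_eq_measure qB_def)
  also have "\<dots> = ennreal (prB s w)"
    using assms by (subst prod_ennreal) (auto simp: qB_def prB_nth intro!: arg_cong[where f=ennreal] prod.cong)
  finally have "emeasure (NB s) (Bs w) = ennreal (prB s w)" .
  moreover have "prB s w \<ge> 0" unfolding prB_def using assms by (induction w) (auto simp: qB_def)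
  ultimately show ?thesis by (simp add: measure_def)
qed



lemma pre_A3: "(shift ^^ i) -` A3 = {x. x i = S3}"
  by (auto simp: A3_def funpow_shift)
lemma pre_nA3: "(shift ^^ i) -` (-A3) = {x. x i \<noteq> S3}"
  by (auto simp: A3_def funpow_shift)

lemma A3_ne: "A3 \<noteq> -A3"
proof
  assume "A3 = -A3"
  moreover have "(\<lambda>_. S3) \<in> A3" by (simp add: A3_def)
  ultimately show False by (metis ComplD)
qed

lemma Bs_ne: "Bs w \<noteq> {}"
proof -
  have "(\<lambda>i. if i < length w \<and> w ! i then S3 else S4) \<in> Bs w" by (auto simp: Bs_def)
  then show ?thesis by blast
qed

lemma inter_Bs:
  assumes "\<forall>i<n. f i \<in> {A3, -A3}"
  shows "(\<Inter>i<n. (shift ^^ i) -` (f i)) = Bs (map (\<lambda>i. f i = A3) [0..<n])"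
proof (rule set_eqI)
  fix x
  have "x \<in> (shift ^^ i) -` (f i) \<longleftrightarrow> (x i = S3) = (f i = A3)" if "i < n" for i
  proof -
    from assms that have "f i = A3 \<or> f i = -A3" by auto
    then show ?thesis
      using A3_ne pre_A3[of i] pre_nA3[of i] by (auto simp del: vimage_Compl)
  qed
  then show "x \<in> (\<Inter>i<n. (shift ^^ i) -` (f i)) \<longleftrightarrow> x \<in> Bs (map (\<lambda>i. f i = A3) [0..<n])"
    unfolding Bs_def by (simp only: Inter_iff INT_iff) auto
qed

lemma join_eq: "join_part (NB s) shift {A3, -A3} n = Bs ` {w. length w = n}"
proof (rule set_eqI)
  fix E
  show "E \<in> join_part (NB s) shift {A3, -A3} n \<longleftrightarrow> E \<in> Bs ` {w. length w = n}"
  proof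
    assume "E \<in> join_part (NB s) shift {A3, -A3} n"
    then obtain f where f: "\<forall>i<n. f i \<in> {A3, -A3}" and E: "E = (\<Inter>i<n. (shift ^^ i) -` (f i)) \<inter> space (NB s)"
      unfolding join_part_def by auto
    then have "E = Bs (map (\<lambda>i. f i = A3) [0..<n])" using inter_Bs[OF f] by (simp add: NB_space)
    then show "E \<in> Bs ` {w. length w = n}" by auto
  next
    assume "E \<in> Bs ` {w. length w = n}"
    then obtain w where w: "length w = n" "E = Bs w" by auto
    define f where "f i = (if w ! i then A3 else -A3)" for i
    have f: "\<forall>i<n. f i \<in> {A3, -A3}" by (simp add: f_def)
    have "map (\<lambda>i. f i = A3) [0..<n] = w"
      using w(1) A3_ne by (intro nth_equalityI) (auto simp: f_def)
    then have "E = (\<Inter>i<n. (shift ^^ i) -` (f i)) \<inter> space (NB s)"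
      using inter_Bs[OF f] w by (simp add: NB_space)
    then show "E \<in> join_part (NB s) shift {A3, -A3} n"
      unfolding join_part_def
      by (intro DiffI CollectI exI[of _ f] conjI) (use f Bs_ne w in auto)
  qed
qed

lemma if_S3[simp]: "((if b then S3 else S4) = S3) = b" by simp

lemma Bs_inj: "inj_on Bs {w. length w = n}"
proof (rule inj_onI)
  fix v w assume v: "v \<in> {w. length w = n}" and w: "w \<in> {w. length w = n}" and eq: "Bs v = Bs w"
  define x where "x = (\<lambda>i. if i < length v \<and> v ! i then S3 else S4)"
  have "x \<in> Bs v" by (auto simp: Bs_def x_def)
  then have "x \<in> Bs w" using eq by simp
  then show "v = w" using v w
    by (intro nth_equalityI) (auto simp: Bs_def x_def)
qed

lemma NB_part_entropy:
  assumes "0 < s" "s < 1"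
  shows "part_entropy (NB s) (join_part (NB s) shift {A3, -A3} n) = real n * HB s"
proof -
  have "part_entropy (NB s) (join_part (NB s) shift {A3, -A3} n)
      = (\<Sum>w\<in>{w. length w = n}. - measure (NB s) (Bs w) * ln (measure (NB s) (Bs w)))"
    unfolding part_entropy_def join_eq by (rule sum.reindex[OF Bs_inj, unfolded comp_def])
  also have "\<dots> = (\<Sum>w\<in>{w::bool list. length w = n}. - prB s w * ln (prB s w))"
    using assms by (simp add: NB_Bs)
  also have "\<dots> = real n * HB s" by (rule prB_ent[OF assms])
  finally show ?thesis .
qed

lemma NB_entropy_part:
  assumes "0 < s" "s < 1"
  shows "entropy_part (NB s) shift {A3, -A3} = HB s"
  unfolding entropy_part_def NB_part_entropy[OF assms]
  by (simp del: of_nat_Suc)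

lemma A3_sets: "A3 \<in> sets (NB s)"
proof -
  have "(\<lambda>x. x 0) -` {S3} \<inter> space (NB s) \<in> sets (NB s)"
    unfolding NB_def by (rule measurable_sets[OF measurable_component_singleton]) auto
  then show ?thesis by (simp add: NB_space A3_def vimage_def)
qed

lemma NB_KS: assumes "0 < s" "s < 1" shows "ereal (HB s) \<le> KS_entropy (NB s) shift"
proof -
  have "finite_meas_partition (NB s) {A3, -A3}"
  proof -
    have c: "-A3 \<in> sets (NB s)"
      using sets.compl_sets[OF A3_sets[of s]] by (simp add: NB_space Compl_eq_Diff_UNIV)
    have d: "disjoint {A3, -A3}" by (auto simp: pairwise_def disjnt_def)
    show "finite_meas_partition (NB s) {A3, -A3}" unfolding finite_meas_partition_def using A3_sets[of s] c d by (auto simp: NB_space)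
  qed
  then show ?thesis unfolding KS_entropy_def NB_entropy_part[OF assms, symmetric]
    by (intro SUP_upper) auto
qed



instance sym :: countable by countable_datatype

lemma SFT234_meas: "SFT234 L \<in> sets seq_space"
proof -
  have "{x \<in> space seq_space. \<forall>n. x n \<in> alphabet L \<and> allowed L (x n) (x (Suc n)) \<and> x n \<in> {S2, S3, S4}} \<in> sets seq_space"
    unfolding seq_space_def by measurable
  moreover have "space seq_space = UNIV" by (simp add: seq_space_def space_PiM)
  ultimately show ?thesis by (simp add: SFT234_def SFT_def) (smt (verit) Collect_cong)
qed

lemma phi_meas: "phi a g d e \<in> borel_measurable seq_space"
proof -
  have "phi a g d e = (\<lambda>x. if x 0 = S2 then (if \<exists>j\<ge>1. x j \<noteq> S2 then - ln (real ((LEAST j. 1 \<le> j \<and> x j \<noteq> S2) + 1) / real (LEAST j. 1 \<le> j \<and> x j \<noteq> S2)) else 0)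
     else if x 0 = S3 then (if \<exists>j\<ge>1. x j = S2 then g - e * ln (real ((LEAST j. 1 \<le> j \<and> x j = S2) + 1) / real (LEAST j. 1 \<le> j \<and> x j = S2)) else g)
     else if x 0 = S4 then (if \<exists>j\<ge>1. x j = S2 then g + d - e * ln (real ((LEAST j. 1 \<le> j \<and> x j = S2) + 1) / real (LEAST j. 1 \<le> j \<and> x j = S2)) else g + d)
     else - a)"
    by (rule ext, unfold phi_def Let_def, case_tac "x 0") simp_all
  also have "\<dots> \<in> borel_measurable seq_space"
    unfolding seq_space_def by measurable
  finally show ?thesis .
qed



lemma set_dB: "set_pmf (dB s) \<subseteq> {S3, S4}"
  unfolding dB_def by auto

lemma NB_AE34: "AE x in NB s. \<forall>n. x n \<in> {S3, S4}"
proof -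
  have "AE x in NB s. x n \<in> {S3, S4}" for n
    unfolding NB_def
    by (rule AE_PiM_component) (use set_dB in \<open>auto intro: measure_pmf.prob_space_axioms simp: AE_measure_pmf_iff\<close>)
  then show ?thesis by (simp add: AE_all_countable)
qed

lemma in34_SFT234: "\<forall>n. x n \<in> {S3, S4} \<Longrightarrow> x \<in> SFT234 L"
  unfolding SFT234_def SFT_def alphabet_def allowed_def by fastforce

lemma NB_inv234: assumes "0 \<le> s" "s \<le> 1" shows "inv_prob_234 L (NB s)"
proof -
  have S: "SFT234 L \<in> sets (NB s)" using SFT234_meas NB_sets by metis
  have "emeasure (NB s) (SFT234 L) = 1"
    by (rule prob_space.emeasure_eq_1_AE[OF NB_prob S]) (rule AE_mp[OF NB_AE34], rule AE_I2, rule impI, erule in34_SFT234)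
  then show ?thesis unfolding inv_prob_234_def using NB_sets NB_prob shift_meas NB_inv S by auto
qed

lemma A3_measure: assumes "0 \<le> s" "s \<le> 1" shows "measure (NB s) A3 = s"
proof -
  have "A3 = Bs [True]" by (auto simp: A3_def Bs_def)
  then show ?thesis using NB_Bs[OF assms, of "[True]"] by (simp add: prB_def qB_def)
qed

lemma NB_integral:
  assumes "0 \<le> s" "s \<le> 1"
  shows "integral\<^sup>L (NB s) (phi a g d e) = g + d * (1 - s)"
proof -
  interpret P: prob_space "NB s" by (rule NB_prob)
  have m1: "phi a g d e \<in> borel_measurable (NB s)"
    using phi_meas measurable_cong_sets[OF NB_sets refl] by blast
  have A3m: "A3 \<in> sets (NB s)" by (rule A3_sets)
  have nA3: "-A3 \<in> sets (NB s)"
    using sets.compl_sets[OF A3m] by (simp add: NB_space Compl_eq_Diff_UNIV)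
  have m2: "(\<lambda>x. g + d * indicator (-A3) x) \<in> borel_measurable (NB s)"
    using nA3 by measurable
  have ae: "AE x in NB s. phi a g d e x = g + d * indicator (-A3) x"
    using NB_AE34
  proof (rule AE_mp, intro AE_I2 impI)
    fix x :: "nat \<Rightarrow> sym" assume x: "\<forall>n. x n \<in> {S3, S4}"
    have n2: "\<not> (\<exists>j\<ge>1. x j = S2)"
    proof
      assume "\<exists>j\<ge>1. x j = S2"
      then obtain j where "x j = S2" by blast
      then show False using x[rule_format, of j] by simp
    qed
    from x have "x 0 = S3 \<or> x 0 = S4" by auto
    then show "phi a g d e x = g + d * indicator (-A3) x"
      using n2 by (auto simp: phi_def Let_def A3_def indicator_def)
  qed
  have "integral\<^sup>L (NB s) (phi a g d e) = integral\<^sup>L (NB s) (\<lambda>x. g + d * indicator (-A3) x)"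
    by (rule integral_cong_AE[OF m1 m2 ae])
  also have "\<dots> = g + d * measure (NB s) (-A3)"
  proof -
    have i1: "integrable (NB s) (\<lambda>_. g)" by simp
    have i2: "integrable (NB s) (\<lambda>x. d * indicator (-A3) x)"
      using nA3 by (intro integrable_mult_right integrable_real_indicator) (auto simp: P.emeasure_eq_measure)
    show ?thesis using nA3 by (simp add: Bochner_Integration.integral_add[OF i1 i2] P.prob_space)
  qed
  also have "measure (NB s) (-A3) = 1 - s"
    using P.prob_compl[OF A3m] A3_measure[OF assms] by (simp add: NB_space Compl_eq_Diff_UNIV)
  finally show ?thesis .
qed

lemma ln_ratio_nonneg: "0 \<le> ln (real (n + 1) / real n)"
  by (cases "n = 0") (auto intro!: ln_ge_zero simp: field_simps)

lemma phi_le: assumes "0 < a" "0 < g" "0 < d" "0 < e" shows "phi a g d e x \<le> g + d"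
proof -
  have l: "0 \<le> ln (real (Suc n) / real n)" for n using ln_ratio_nonneg[of n] by simp
  have l2: "0 \<le> e * ln (real (Suc n) / real n)" for n using l[of n] assms by simp
  have h2: "- ln (real (Suc n) / real n) \<le> g + d" for n using l[of n] assms by linarith
  have h3: "g - e * ln (real (Suc n) / real n) \<le> g + d" for n using l2[of n] assms by linarith
  have h4: "g + d - e * ln (real (Suc n) / real n) \<le> g + d" for n using l2[of n] assms by linarith
  show ?thesis using assms h2 h3 h4
    unfolding phi_def Let_def
    by (cases "x 0") (auto simp del: of_nat_Suc)
qed



lemma mlnm_bounds: assumes "0 \<le> m" "m \<le> (1::real)" shows "0 \<le> - m * ln m" "- m * ln m \<le> 1"
proof -
  show "0 \<le> - m * ln m"
  proof (cases "m = 0")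
    case False
    then have "ln m \<le> 0" using assms by simp
    then show ?thesis using assms by (simp add: mult_nonneg_nonpos)
  qed simp
  show "- m * ln m \<le> 1"
  proof (cases "m = 0")
    case False
    then have mp: "0 < m" using assms by simp
    have "ln (1/m) \<le> 1/m - 1" using ln_le_minus_one mp by simp
    then have "- ln m \<le> 1/m - 1" using mp by (simp add: ln_div)
    then have "m * (- ln m) \<le> m * (1/m - 1)" using mp by (intro mult_left_mono) auto
    also have "\<dots> = 1 - m" using mp by (simp add: field_simps)
    finally show ?thesis using assms by simp
  qed simp
qed

lemma ent_bound:
  assumes P: "prob_space M" and ae: "AE x in M. x \<in> S" and S: "S \<subseteq> {a, b}"
    and disj: "\<And>E1 E2. E1 \<in> J \<Longrightarrow> E2 \<in> J \<Longrightarrow> E1 \<noteq> E2 \<Longrightarrow> E1 \<inter> E2 = {}"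
  shows "0 \<le> part_entropy M J \<and> part_entropy M J \<le> 2"
proof (cases "finite J")
  case False then show ?thesis by (simp add: part_entropy_def)
next
  case fin: True
  interpret prob_space M by (rule P)
  define h where "h E = - measure M E * ln (measure M E)" for E
  have hb: "0 \<le> h E" "h E \<le> 1" for E unfolding h_def by (intro mlnm_bounds; simp)+
  define J' where "J' = {E \<in> J. measure M E \<noteq> 0}"
  have nz: "E \<inter> S \<noteq> {}" if "E \<in> J'" for E
  proof
    assume e: "E \<inter> S = {}"
    from that have m: "measure M E \<noteq> 0" by (simp add: J'_def)
    then have Es: "E \<in> sets M" using measure_notin_sets by blast
    have "AE x in M. x \<notin> E" using ae e by (auto elim!: AE_mp)
    then have "emeasure M E = 0"
      using AE_iff_measurable[OF Es, of "\<lambda>x. x \<notin> E"] sets.sets_into_space[OF Es] by auto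
    then show False using m by (simp add: emeasure_eq_measure)
  qed
  define c where "c E = (SOME x. x \<in> E \<inter> S)" for E
  have c: "c E \<in> E \<inter> S" if "E \<in> J'" for E
    using nz[OF that] unfolding c_def by (metis all_not_in_conv someI)
  have inj: "inj_on c J'"
  proof (rule inj_onI)
    fix E1 E2 assume "E1 \<in> J'" "E2 \<in> J'" "c E1 = c E2"
    then have "E1 \<inter> E2 \<noteq> {}" using c by (metis IntD1 disjoint_iff)
    then show "E1 = E2" using disj \<open>E1 \<in> J'\<close> \<open>E2 \<in> J'\<close> unfolding J'_def by blast
  qed
  have "card J' \<le> card {a, b}"
    by (rule card_inj_on_le[OF inj]) (use c S in auto)
  also have "\<dots> \<le> 2" by (simp add: card_insert_le_m1)
  finally have cJ: "card J' \<le> 2" .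
  have "part_entropy M J = sum h J" by (simp add: part_entropy_def h_def)
  also have "\<dots> = sum h J'"
    using fin by (intro sum.mono_neutral_right) (auto simp: J'_def h_def)
  finally have eq: "part_entropy M J = sum h J'" .
  have "sum h J' \<le> of_nat (card J') * 1" by (rule sum_bounded_above) (use hb in auto)
  also have "\<dots> \<le> 2" using cJ by simp
  finally show ?thesis using eq hb by (simp add: sum_nonneg)
qed



lemma seq_space_UNIV: "space seq_space = UNIV" by (simp add: seq_space_def space_PiM)

lemma Cn_sets: "{x. x n = S3} \<in> sets seq_space"
proof -
  have "(\<lambda>x. x n) -` {S3} \<inter> space seq_space \<in> sets seq_space"
    unfolding seq_space_def by (rule measurable_sets[OF measurable_component_singleton]) auto
  then show ?thesis by (simp add: seq_space_UNIV vimage_def)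
qed

lemma join_disj:
  assumes "disjoint P" "E1 \<in> join_part M T P n" "E2 \<in> join_part M T P n" "E1 \<noteq> E2"
  shows "E1 \<inter> E2 = {}"
proof -
  obtain f where f: "\<forall>i<n. f i \<in> P" "E1 = (\<Inter>i<n. (T ^^ i) -` (f i)) \<inter> space M"
    using assms(2) unfolding join_part_def by auto
  obtain g where g: "\<forall>i<n. g i \<in> P" "E2 = (\<Inter>i<n. (T ^^ i) -` (g i)) \<inter> space M"
    using assms(3) unfolding join_part_def by auto
  have "\<exists>i<n. f i \<noteq> g i"
  proof (rule ccontr)
    assume "\<not> (\<exists>i<n. f i \<noteq> g i)"
    then have "(\<Inter>i<n. (T ^^ i) -` (f i)) = (\<Inter>i<n. (T ^^ i) -` (g i))" by auto
    then show False using f g assms(4) by simp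
  qed
  then obtain i where i: "i < n" "f i \<noteq> g i" by blast
  then have "f i \<inter> g i = {}" using assms(1) f(1) g(1) by (auto simp: pairwise_def disjnt_def)
  moreover have "E1 \<subseteq> (T ^^ i) -` (f i)" "E2 \<subseteq> (T ^^ i) -` (g i)" using f g i by auto
  ultimately show ?thesis by blast
qed

lemma entropy_part_zero:
  assumes P: "prob_space M" and ae: "AE x in M. x \<in> S" and S: "S \<subseteq> {a, b}"
    and part: "finite_meas_partition M Q"
  shows "entropy_part M T Q = 0"
proof -
  define u where "u n = part_entropy M (join_part M T Q (Suc n)) / real (Suc n)" for n
  have dQ: "disjoint Q" using part by (simp add: finite_meas_partition_def)
  have b: "0 \<le> part_entropy M (join_part M T Q (Suc n)) \<and> part_entropy M (join_part M T Q (Suc n)) \<le> 2" for n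
    by (rule ent_bound[OF P ae S]) (use join_disj[OF dQ] in blast)
  have lo: "0 \<le> u n" for n using b[of n] by (simp add: u_def)
  have hi: "u n \<le> 2 / real (Suc n)" for n using b[of n] by (simp add: u_def divide_right_mono)
  have t: "(\<lambda>n. 2 / real (Suc n)) \<longlonglongrightarrow> 0"
  proof -
    have "(\<lambda>n. 2 * inverse (real (Suc n))) \<longlonglongrightarrow> 0"
      by (intro tendsto_mult_right_zero LIMSEQ_inverse_real_of_nat)
    then show ?thesis by (simp add: divide_inverse del: of_nat_Suc)
  qed
  have "u \<longlonglongrightarrow> 0"
    by (rule tendsto_sandwich[OF _ _ tendsto_const t]) (use lo hi in auto)
  then show ?thesis unfolding entropy_part_def u_def[symmetric] by (rule limI)
qed

lemma KS_le0:
  assumes P: "prob_space M" and ae: "AE x in M. x \<in> S" and S: "S \<subseteq> {a, b}"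
  shows "KS_entropy M T \<le> 0"
  unfolding KS_entropy_def
  by (rule SUP_least) (simp add: entropy_part_zero[OF P ae S] zero_ereal_def)



lemma S'_sub: assumes "x \<in> SFT234 L" "\<forall>n. x n \<noteq> S3"
  shows "x \<in> {\<lambda>_. S2, \<lambda>_. S4}"
proof -
  have x0: "x 0 = S2 \<or> x 0 = S4" using assms by (auto simp: SFT234_def)
  have "x n = x 0" for n
  proof (induction n)
    case (Suc n)
    have a: "allowed L (x n) (x (Suc n))" using assms(1) by (simp add: SFT234_def SFT_def)
    have b: "x (Suc n) \<in> {S2, S3, S4}" using assms(1) by (simp add: SFT234_def)
    have c: "x (Suc n) \<noteq> S3" using assms(2) by blast
    from x0 Suc a b c show ?case by (auto simp: allowed_def is_one_def)
  qed simp
  then have "x = (\<lambda>_. x 0)" by auto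
  then show ?thesis using x0 by auto
qed

theorem mainTheorem10:
  fixes L :: nat and \<alpha> \<gamma> \<delta> \<epsilon> \<beta> :: real and \<mu> :: "(nat \<Rightarrow> sym) measure"
  assumes "L \<ge> 1" and "\<alpha> > 0" and "\<gamma> > 0" and "\<delta> > 0" and "\<epsilon> > 0"
    and "\<beta> \<ge> 0"
    and "equilibrium_state_234 L \<beta> (phi \<alpha> \<gamma> \<delta> \<epsilon>) \<mu>"
  shows "measure \<mu> {x. x 0 = S3} > 0"
proof (rule ccontr)
  assume neg: "\<not> measure \<mu> {x. x 0 = S3} > 0"
  have inv: "inv_prob_234 L \<mu>" and max: "\<And>N. inv_prob_234 L N \<Longrightarrow>
      free_energy \<beta> (phi \<alpha> \<gamma> \<delta> \<epsilon>) N \<le> free_energy \<beta> (phi \<alpha> \<gamma> \<delta> \<epsilon>) \<mu>"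
    using assms(7) unfolding equilibrium_state_234_def by auto
  have sets: "sets \<mu> = sets seq_space" and P: "prob_space \<mu>" and sm: "shift \<in> measurable \<mu> \<mu>"
    and dist: "distr \<mu> \<mu> shift = \<mu>" and Ss: "SFT234 L \<in> sets \<mu>" and S1: "emeasure \<mu> (SFT234 L) = 1"
    using inv unfolding inv_prob_234_def by auto
  interpret P: prob_space \<mu> by (rule P)
  have sp: "space \<mu> = UNIV" using sets_eq_imp_space_eq[OF sets] seq_space_UNIV by simp
  have Cs: "{x. x n = S3} \<in> sets \<mu>" for n using Cn_sets sets by auto
  have m0: "measure \<mu> {x. x 0 = S3} = 0" using neg measure_nonneg[of \<mu> "{x. x 0 = S3}"] by linarith
  have e0: "emeasure \<mu> {x. x n = S3} = 0" for n
  proof (induction n)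
    case 0 then show ?case using m0 by (simp add: P.emeasure_eq_measure)
  next
    case (Suc n)
    have "{x. x (Suc n) = S3} = shift -` {x. x n = S3} \<inter> space \<mu>" by (auto simp: sp shift_def)
    then have "emeasure \<mu> {x. x (Suc n) = S3} = emeasure (distr \<mu> \<mu> shift) {x. x n = S3}"
      by (simp add: emeasure_distr[OF sm Cs])
    then show ?case using dist Suc by simp
  qed
  define S' where "S' = {x \<in> SFT234 L. \<forall>n. x n \<noteq> S3}"
  have ae1: "AE x in \<mu>. x \<in> SFT234 L"
    by (rule P.AE_prob_1) (use S1 in \<open>simp add: P.emeasure_eq_measure\<close>)
  have ae2: "AE x in \<mu>. x n \<noteq> S3" for n
    by (rule AE_I'[of "{x. x n = S3}"]) (use Cs e0 in \<open>auto simp: sp\<close>)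
  have ae: "AE x in \<mu>. x \<in> S'"
  proof -
    have "AE x in \<mu>. \<forall>n. x n \<noteq> S3" using ae2 by (simp add: AE_all_countable)
    with ae1 show ?thesis by eventually_elim (simp add: S'_def)
  qed
  have Ssub: "S' \<subseteq> {\<lambda>_. S2, \<lambda>_. S4}" using S'_sub unfolding S'_def by blast
  have KSm: "KS_entropy \<mu> shift \<le> 0" by (rule KS_le0[OF P ae Ssub])
  have intm: "integral\<^sup>L \<mu> (phi \<alpha> \<gamma> \<delta> \<epsilon>) \<le> \<gamma> + \<delta>"
  proof (cases "integrable \<mu> (phi \<alpha> \<gamma> \<delta> \<epsilon>)")
    case True
    then have "integral\<^sup>L \<mu> (phi \<alpha> \<gamma> \<delta> \<epsilon>) \<le> integral\<^sup>L \<mu> (\<lambda>_. \<gamma> + \<delta>)"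
      by (intro integral_mono) (use phi_le assms in auto)
    then show ?thesis by (simp add: P.prob_space)
  next
    case False then show ?thesis using assms by (simp add: not_integrable_integral_eq)
  qed
  have Fm: "free_energy \<beta> (phi \<alpha> \<gamma> \<delta> \<epsilon>) \<mu> \<le> ereal (\<beta> * (\<gamma> + \<delta>))"
  proof -
    have "ereal (\<beta> * integral\<^sup>L \<mu> (phi \<alpha> \<gamma> \<delta> \<epsilon>)) \<le> ereal (\<beta> * (\<gamma> + \<delta>))"
      using intm assms(6) by (simp add: mult_left_mono)
    then show ?thesis unfolding free_energy_def using KSm
      by (metis add.left_neutral add_mono)
  qed
  define s where "s = exp (- \<beta> * \<delta>) / 2"
  have s0: "0 < s" by (simp add: s_def)
  have s1: "s < 1"
  proof -
    have "0 \<le> \<beta> * \<delta>" using assms(4,6) by simp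
    then have "exp (- \<beta> * \<delta>) \<le> 1" by simp
    then show ?thesis unfolding s_def by linarith
  qed
  have lns: "ln s = - \<beta> * \<delta> - ln 2" unfolding s_def by (simp add: ln_div)
  have H: "HB s > \<beta> * \<delta> * s"
  proof -
    have "0 \<le> - (1 - s) * ln (1 - s)" using s0 s1 by (intro mlnm_bounds) auto
    moreover have "- s * ln s = s * (\<beta> * \<delta>) + s * ln 2" proof -
      have "- s * ln s = s * (- ln s)" by simp
      also have "- ln s = \<beta> * \<delta> + ln 2" using lns by simp
      finally show ?thesis by (simp add: distrib_left)
    qed
    moreover have "s * ln 2 > 0" using s0 by simp
    ultimately show ?thesis unfolding HB_def by (simp add: algebra_simps)
  qed
  have inN: "inv_prob_234 L (NB s)" using NB_inv234 s0 s1 by simp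
  have A: "ereal (HB s) + ereal (\<beta> * (\<gamma> + \<delta> * (1 - s))) \<le> free_energy \<beta> (phi \<alpha> \<gamma> \<delta> \<epsilon>) (NB s)"
    unfolding free_energy_def NB_integral[OF less_imp_le[OF s0] less_imp_le[OF s1]]
    using NB_KS[OF s0 s1] by (intro add_right_mono) auto
  have B: "ereal (\<beta> * (\<gamma> + \<delta>)) < ereal (HB s) + ereal (\<beta> * (\<gamma> + \<delta> * (1 - s)))"
    using H by (simp add: algebra_simps)
  have "free_energy \<beta> (phi \<alpha> \<gamma> \<delta> \<epsilon>) \<mu> < free_energy \<beta> (phi \<alpha> \<gamma> \<delta> \<epsilon>) (NB s)"
    using Fm B A by (meson order.strict_trans1 order.strict_trans2)
  then show False using max[OF inN] by simp
qed


end
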